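(* Let $M$ be a von Neumann algebra and let $a\in M$ with $0\le a\le 1$. Then an element $b\in M$ with $0\le b\le 1$ commutes with $a$ if, and only if, there exist $b_1,b_2,b_3\in M$ with $0\le b_1\le s(a)$, $0\le b_2\le r(e(a))$ and $0\le b_3\le n(a)$ such that $b_2$ commutes with $e(a)$ and $b=b_1+b_2+b_3$.
   Context: For a positive element $x$ of a von Neumann algebra $M$, $r(x)$ denotes its range projection (smallest projection $p$ with $px=x$). For $0\le a\le 1$ in $M$: the support projection is $s(a)=1-r(1-a)$ (the largest projection $p\in M$ with $pa=p$); the almost strict part is $e(a)=a-s(a)$; and $n(a)=1-r(a)$. The projections $s(a)$, $r(e(a))$, $n(a)$ are mutually orthogonal with sum $1$. *)

theory Defs
  imports Complex_Main
begin

class complex_vector = ab_group_add +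
  fixes scaleC :: "complex \<Rightarrow> 'a \<Rightarrow> 'a"
  assumes scaleC_add_right: "scaleC c (x + y) = scaleC c x + scaleC c y"
    and scaleC_add_left: "scaleC (c + d) x = scaleC c x + scaleC d x"
    and scaleC_scaleC: "scaleC c (scaleC d x) = scaleC (c * d) x"
    and scaleC_one: "scaleC 1 x = x"

class complex_inner = complex_vector +
  fixes cinner :: "'a \<Rightarrow> 'a \<Rightarrow> complex"
  assumes cinner_commute: "cinner x y = cnj (cinner y x)"
    and cinner_add_left: "cinner (x + y) z = cinner x z + cinner y z"
    and cinner_scaleC_left: "cinner (scaleC c x) y = cnj c * cinner x y"
    and cinner_self_real: "Im (cinner x x) = 0"
    and cinner_self_nonneg: "0 \<le> Re (cinner x x)"
    and cinner_self_eq_zero: "cinner x x = 0 \<longleftrightarrow> x = 0"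

definition hnorm :: "'a::complex_inner \<Rightarrow> real" where
  "hnorm x = sqrt (Re (cinner x x))"

class chilbert_space = complex_inner +
  assumes hnorm_complete:
    "(\<forall>e>0. \<exists>N::nat. \<forall>m\<ge>N. \<forall>n\<ge>N. sqrt (Re (cinner (X m - X n) (X m - X n))) < e) \<Longrightarrow>
     (\<exists>L. \<forall>e>0. \<exists>N::nat. \<forall>n\<ge>N. sqrt (Re (cinner (X n - L) (X n - L))) < e)"

definition bounded_op :: "('h::chilbert_space \<Rightarrow> 'h) \<Rightarrow> bool" where
  "bounded_op T \<longleftrightarrow>
     (\<forall>x y. T (x + y) = T x + T y) \<and> (\<forall>c x. T (scaleC c x) = scaleC c (T x)) \<and>
     (\<exists>K. \<forall>x. hnorm (T x) \<le> K * hnorm x)"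

definition adj :: "('h::chilbert_space \<Rightarrow> 'h) \<Rightarrow> ('h \<Rightarrow> 'h)" where
  "adj T = (SOME S. \<forall>x y. cinner (T x) y = cinner x (S y))"

definition op_zero :: "'h::chilbert_space \<Rightarrow> 'h" where
  "op_zero = (\<lambda>x. 0)"

definition op_add :: "('h::chilbert_space \<Rightarrow> 'h) \<Rightarrow> ('h \<Rightarrow> 'h) \<Rightarrow> ('h \<Rightarrow> 'h)" where
  "op_add A B = (\<lambda>x. A x + B x)"

definition op_sub :: "('h::chilbert_space \<Rightarrow> 'h) \<Rightarrow> ('h \<Rightarrow> 'h) \<Rightarrow> ('h \<Rightarrow> 'h)" where
  "op_sub A B = (\<lambda>x. A x - B x)"

definition op_pos :: "('h::chilbert_space \<Rightarrow> 'h) \<Rightarrow> bool" where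
  "op_pos T \<longleftrightarrow> (\<forall>x. Im (cinner (T x) x) = 0 \<and> 0 \<le> Re (cinner (T x) x))"

definition op_le :: "('h::chilbert_space \<Rightarrow> 'h) \<Rightarrow> ('h \<Rightarrow> 'h) \<Rightarrow> bool" where
  "op_le A B \<longleftrightarrow> op_pos (op_sub B A)"

definition commutant :: "('h::chilbert_space \<Rightarrow> 'h) set \<Rightarrow> ('h \<Rightarrow> 'h) set" where
  "commutant S = {T. bounded_op T \<and> (\<forall>A\<in>S. T \<circ> A = A \<circ> T)}"

definition von_neumann_algebra :: "('h::chilbert_space \<Rightarrow> 'h) set \<Rightarrow> bool" where
  "von_neumann_algebra M \<longleftrightarrow>
     M \<subseteq> {T. bounded_op T} \<and> id \<in> M \<and>
     (\<forall>A\<in>M. \<forall>B\<in>M. op_add A B \<in> M \<and> A \<circ> B \<in> M) \<and>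
     (\<forall>c. \<forall>A\<in>M. (\<lambda>x. scaleC c (A x)) \<in> M) \<and>
     (\<forall>A\<in>M. adj A \<in> M) \<and>
     commutant (commutant M) = M"

definition is_proj_in :: "('h::chilbert_space \<Rightarrow> 'h) set \<Rightarrow> ('h \<Rightarrow> 'h) \<Rightarrow> bool" where
  "is_proj_in M p \<longleftrightarrow> p \<in> M \<and> p \<circ> p = p \<and> adj p = p"

definition range_proj :: "('h::chilbert_space \<Rightarrow> 'h) set \<Rightarrow> ('h \<Rightarrow> 'h) \<Rightarrow> ('h \<Rightarrow> 'h)" where
  "range_proj M x = (THE p. is_proj_in M p \<and> p \<circ> x = x \<and>
       (\<forall>q. is_proj_in M q \<and> q \<circ> x = x \<longrightarrow> op_le p q))"

definition supp_proj :: "('h::chilbert_space \<Rightarrow> 'h) set \<Rightarrow> ('h \<Rightarrow> 'h) \<Rightarrow> ('h \<Rightarrow> 'h)" where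
  "supp_proj M a = op_sub id (range_proj M (op_sub id a))"

definition as_part :: "('h::chilbert_space \<Rightarrow> 'h) set \<Rightarrow> ('h \<Rightarrow> 'h) \<Rightarrow> ('h \<Rightarrow> 'h)" where
  "as_part M a = op_sub a (supp_proj M a)"

definition null_proj :: "('h::chilbert_space \<Rightarrow> 'h) set \<Rightarrow> ('h \<Rightarrow> 'h) \<Rightarrow> ('h \<Rightarrow> 'h)" where
  "null_proj M a = op_sub id (range_proj M a)"

end

theory Submission
  imports Defs
begin


lemma scaleC_zero_left[simp]: "scaleC 0 (x::'a::complex_vector) = 0"
proof -
  have "scaleC 0 x = scaleC 0 x + scaleC 0 x" using scaleC_add_left[of 0 0 x] by simp
  thus ?thesis by simp
qed
lemma scaleC_zero_right[simp]: "scaleC c (0::'a::complex_vector) = 0"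
proof -
  have "scaleC c (0::'a) = scaleC c 0 + scaleC c 0" using scaleC_add_right[of c 0 0] by simp
  thus ?thesis by simp
qed
lemma scaleC_minus_right: "scaleC c (- (x::'a::complex_vector)) = - scaleC c x"
proof -
  have "scaleC c x + scaleC c (- x) = 0" using scaleC_add_right[of c x "-x"] by simp
  thus ?thesis by (simp add: add_eq_0_iff)
qed
lemma scaleC_diff_right: "scaleC c ((x::'a::complex_vector) - y) = scaleC c x - scaleC c y"
  using scaleC_add_right[of c x "-y"] by (simp add: scaleC_minus_right)
lemma scaleC_minus_left: "scaleC (- c) (x::'a::complex_vector) = - scaleC c x"
proof -
  have "scaleC c x + scaleC (- c) x = 0" using scaleC_add_left[of c "-c" x] by simp
  thus ?thesis by (simp add: add_eq_0_iff)
qed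
lemma scaleC_diff_left: "scaleC (c - d) (x::'a::complex_vector) = scaleC c x - scaleC d x"
  using scaleC_add_left[of c "-d" x] by (simp add: scaleC_minus_left)
lemma scaleC_minus1: "scaleC (-1) (x::'a::complex_vector) = - x"
  by (simp add: scaleC_minus_left scaleC_one)

lemma cinner_add_right: "cinner (x::'a::complex_inner) (y + z) = cinner x y + cinner x z"
  by (metis cinner_add_left cinner_commute complex_cnj_add)
lemma cinner_scaleC_right: "cinner (x::'a::complex_inner) (scaleC c y) = c * cinner x y"
  by (metis cinner_commute cinner_scaleC_left complex_cnj_cnj complex_cnj_mult)
lemma cinner_zero_left[simp]: "cinner (0::'a::complex_inner) y = 0"
  using cinner_add_left[of "0::'a" 0 y] by simp
lemma cinner_zero_right[simp]: "cinner (x::'a::complex_inner) 0 = 0"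
  using cinner_add_right[of x 0 0] by simp
lemma cinner_minus_left: "cinner (- (x::'a::complex_inner)) y = - cinner x y"
proof -
  have "cinner x y + cinner (-x) y = 0" using cinner_add_left[of x "-x" y] by simp
  thus ?thesis by (simp add: add_eq_0_iff)
qed
lemma cinner_minus_right: "cinner (x::'a::complex_inner) (- y) = - cinner x y"
proof -
  have "cinner x y + cinner x (-y) = 0" using cinner_add_right[of x y "-y"] by simp
  thus ?thesis by (simp add: add_eq_0_iff)
qed
lemma cinner_diff_left: "cinner ((x::'a::complex_inner) - y) z = cinner x z - cinner y z"
  using cinner_add_left[of x "-y" z] by (simp add: cinner_minus_left)
lemma cinner_diff_right: "cinner (x::'a::complex_inner) (y - z) = cinner x y - cinner x z"
  using cinner_add_right[of x y "-z"] by (simp add: cinner_minus_right)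
lemma cinner_self: "cinner (x::'a::complex_inner) x = complex_of_real (Re (cinner x x))"
  using cinner_self_real[of x] by (simp add: complex_eq_iff)

lemma hnorm_sq: "(hnorm (x::'a::complex_inner))^2 = Re (cinner x x)"
  unfolding hnorm_def using cinner_self_nonneg[of x] by simp
lemma hnorm_nonneg: "0 \<le> hnorm (x::'a::complex_inner)" unfolding hnorm_def using cinner_self_nonneg[of x] by simp
lemma Re_self_zero_iff: "Re (cinner (x::'a::complex_inner) x) = 0 \<longleftrightarrow> x = 0"
  by (metis cinner_self cinner_self_eq_zero of_real_0 zero_complex.simps(1))
lemma hnorm_zero_iff: "hnorm (x::'a::complex_inner) = 0 \<longleftrightarrow> x = 0"
  unfolding hnorm_def using Re_self_zero_iff[of x] cinner_self_nonneg[of x] by simp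

lemma cinner_expand: "cinner ((x::'a::complex_inner) + y) (x + y) = cinner x x + cinner y y + (cinner x y + cnj (cinner x y))"
proof -
  have "cinner (x+y) (x+y) = cinner x x + cinner x y + (cinner y x + cinner y y)"
    by (simp add: cinner_add_left cinner_add_right)
  also have "cinner y x = cnj (cinner x y)" by (rule cinner_commute)
  finally show ?thesis by simp
qed
lemma Re_cinner_expand: "Re (cinner ((x::'a::complex_inner) + y) (x + y)) = Re (cinner x x) + Re (cinner y y) + 2 * Re (cinner x y)"
  using cinner_expand[of x y] by simp

lemma cauchy_schwarz: "cmod (cinner (x::'a::complex_inner) y) \<le> hnorm x * hnorm y"
proof (cases "y = 0")
  case True thus ?thesis by (simp add: hnorm_nonneg)
next
  case False
  define B where "B = Re (cinner y y)"
  have Bpos: "B > 0" unfolding B_def using False Re_self_zero_iff cinner_self_nonneg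
    by (metis less_eq_real_def)
  define t where "t = cinner y x / complex_of_real B"
  have yy: "cinner y y = complex_of_real B" unfolding B_def by (rule cinner_self)
  have xy: "cinner x y = cnj (cinner y x)" by (rule cinner_commute)
  have "0 \<le> Re (cinner (x - scaleC t y) (x - scaleC t y))" by (rule cinner_self_nonneg)
  also have "cinner (x - scaleC t y) (x - scaleC t y) =
     cinner x x - t * cinner x y - cnj t * cinner y x + cnj t * t * cinner y y"
    by (simp add: cinner_diff_left cinner_diff_right cinner_scaleC_left cinner_scaleC_right algebra_simps)
  also have "\<dots> = cinner x x - cinner y x * cnj (cinner y x) / complex_of_real B"
    using Bpos unfolding t_def yy xy
    by (simp add: field_simps)
  finally have "0 \<le> Re (cinner x x) - (cmod (cinner y x))^2 / B"
    unfolding complex_norm_square[symmetric] of_real_divide[symmetric] by simp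
  hence "(cmod (cinner y x))^2 \<le> Re (cinner x x) * B" using Bpos by (simp add: field_simps)
  also have "\<dots> = (hnorm x * hnorm y)^2" by (simp add: power_mult_distrib hnorm_sq B_def)
  finally have "(cmod (cinner x y))^2 \<le> (hnorm x * hnorm y)^2"
    by (metis xy complex_mod_cnj)
  thus ?thesis using hnorm_nonneg by (meson mult_nonneg_nonneg power2_le_imp_le)
qed

lemma hnorm_triangle: "hnorm ((x::'a::complex_inner) + y) \<le> hnorm x + hnorm y"
proof -
  have "(hnorm (x+y))^2 = (hnorm x)^2 + (hnorm y)^2 + 2 * Re (cinner x y)"
    by (simp add: hnorm_sq Re_cinner_expand)
  also have "Re (cinner x y) \<le> hnorm x * hnorm y"
    using cauchy_schwarz[of x y] complex_Re_le_cmod order_trans by blast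
  hence "(hnorm x)^2 + (hnorm y)^2 + 2 * Re (cinner x y) \<le> (hnorm x + hnorm y)^2"
    by (simp add: power2_sum)
  finally show ?thesis using hnorm_nonneg by (meson add_nonneg_nonneg power2_le_imp_le)
qed

lemma hnorm_minus: "hnorm (- (x::'a::complex_inner)) = hnorm x"
  unfolding hnorm_def by (simp add: cinner_minus_left cinner_minus_right)
lemma hnorm_diff_commute: "hnorm ((x::'a::complex_inner) - y) = hnorm (y - x)"
  by (metis hnorm_minus minus_diff_eq)



definition hconv :: "(nat \<Rightarrow> 'a::complex_inner) \<Rightarrow> 'a \<Rightarrow> bool" where
  "hconv X L \<longleftrightarrow> (\<forall>e>0. \<exists>N. \<forall>n\<ge>N. hnorm (X n - L) < e)"
definition csubspace :: "'a::complex_vector set \<Rightarrow> bool" where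
  "csubspace K \<longleftrightarrow> 0 \<in> K \<and> (\<forall>x\<in>K. \<forall>y\<in>K. x + y \<in> K) \<and> (\<forall>c. \<forall>x\<in>K. scaleC c x \<in> K)"
definition hclosed :: "'a::complex_inner set \<Rightarrow> bool" where
  "hclosed K \<longleftrightarrow> (\<forall>X L. (\<forall>n. X n \<in> K) \<longrightarrow> hconv X L \<longrightarrow> L \<in> K)"
definition orth :: "'a::complex_inner set \<Rightarrow> 'a \<Rightarrow> bool" where
  "orth K y \<longleftrightarrow> (\<forall>k\<in>K. cinner k y = 0)"

lemma hcomplete:
  fixes X :: "nat \<Rightarrow> 'a::chilbert_space"
  assumes "\<forall>e>0. \<exists>N. \<forall>m\<ge>N. \<forall>n\<ge>N. hnorm (X m - X n) < e"
  shows "\<exists>L. hconv X L"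
  using hnorm_complete[of X] assms unfolding hconv_def hnorm_def by blast

lemma quad_zero:
  fixes A B :: real
  assumes "\<forall>t. 0 \<le> 2 * t * A + t^2 * B"
  shows "A = 0"
proof (rule ccontr)
  assume nz: "A \<noteq> 0"
  define C where "C = \<bar>B\<bar> + 1"
  have C: "C > 0" unfolding C_def by simp
  have BC: "B - 2 * C < 0" using C_def by arith
  define t where "t = - A / C"
  have "0 \<le> 2 * t * A + t^2 * B" using assms by blast
  also have "2 * t * A + t^2 * B = (A^2 / C^2) * (B - 2 * C)"
    unfolding t_def using C by (simp add: field_simps power2_eq_square)
  also have "\<dots> < 0"
  proof (rule mult_pos_neg)
    show "0 < A^2 / C^2" using nz C by simp
    show "B - 2 * C < 0" by (rule BC)
  qed
  finally show False by simp
qed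

lemma Q_scale: "Re (cinner (scaleC c (z::'a::complex_inner)) (scaleC c z)) = (cmod c)^2 * Re (cinner z z)"
proof -
  define r where "r = (cmod c)^2"
  have "cinner (scaleC c z) (scaleC c z) = (c * cnj c) * cinner z z"
    by (simp add: cinner_scaleC_left cinner_scaleC_right algebra_simps)
  also have "c * cnj c = complex_of_real r" unfolding r_def by (metis complex_norm_square)
  finally have "cinner (scaleC c z) (scaleC c z) = complex_of_real r * cinner z z" .
  hence "Re (cinner (scaleC c z) (scaleC c z)) = r * Re (cinner z z)" by simp
  thus ?thesis unfolding r_def .
qed

lemma min_orth:
  fixes w k :: "'a::complex_inner"
  assumes "\<forall>c. Re (cinner w w) \<le> Re (cinner (w - scaleC c k) (w - scaleC c k))"
  shows "cinner k w = 0"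
proof -
  have gen: "Re (cinner (w - scaleC c k) (w - scaleC c k)) = Re (cinner w w) + (cmod c)^2 * Re (cinner k k) - 2 * Re (c * cinner w k)" for c
  proof -
    have "Re (cinner (w + - scaleC c k) (w + - scaleC c k)) = Re (cinner w w) + Re (cinner (- scaleC c k) (- scaleC c k)) + 2 * Re (cinner w (- scaleC c k))"
      by (rule Re_cinner_expand)
    moreover have "Re (cinner (- scaleC c k) (- scaleC c k)) = (cmod c)^2 * Re (cinner k k)"
      using Q_scale[of c k] by (simp add: cinner_minus_left cinner_minus_right)
    moreover have "Re (cinner w (- scaleC c k)) = - Re (c * cinner w k)"
      by (simp add: cinner_minus_right cinner_scaleC_right)
    ultimately show ?thesis by simp
  qed
  have "Re (cinner w k) = 0"
  proof -
    have "\<forall>t. 0 \<le> 2 * t * (- Re (cinner w k)) + t^2 * Re (cinner k k)"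
    proof
      fix t :: real
      have "Re (cinner w w) \<le> Re (cinner (w - scaleC (complex_of_real t) k) (w - scaleC (complex_of_real t) k))"
        using assms by blast
      thus "0 \<le> 2 * t * (- Re (cinner w k)) + t^2 * Re (cinner k k)"
        unfolding gen by (simp add: power2_eq_square)
    qed
    from quad_zero[OF this] show ?thesis by simp
  qed
  moreover have "Im (cinner w k) = 0"
  proof -
    have "\<forall>t. 0 \<le> 2 * t * (Im (cinner w k)) + t^2 * Re (cinner k k)"
    proof
      fix t :: real
      have "Re (cinner w w) \<le> Re (cinner (w - scaleC (complex_of_real t * \<i>) k) (w - scaleC (complex_of_real t * \<i>) k))"
        using assms by blast
      moreover have "(cmod (complex_of_real t * \<i>))^2 = t^2" by (simp add: norm_mult)
      ultimately show "0 \<le> 2 * t * (Im (cinner w k)) + t^2 * Re (cinner k k)"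
        unfolding gen by (simp add: power2_eq_square)
    qed
    from quad_zero[OF this] show ?thesis by simp
  qed
  ultimately have "cinner w k = 0" by (simp add: complex_eq_iff)
  thus ?thesis by (metis cinner_commute complex_cnj_zero)
qed

lemma parallelogram:
  "Re (cinner ((a::'a::complex_inner) - b) (a - b)) + Re (cinner (a + b) (a + b)) = 2 * Re (cinner a a) + 2 * Re (cinner b b)"
proof -
  have "Re (cinner (a + - b) (a + - b)) = Re (cinner a a) + Re (cinner (-b) (-b)) + 2 * Re (cinner a (-b))"
    by (rule Re_cinner_expand)
  moreover have "Re (cinner (a + b) (a + b)) = Re (cinner a a) + Re (cinner b b) + 2 * Re (cinner a b)"
    by (rule Re_cinner_expand)
  ultimately show ?thesis by (simp add: cinner_minus_left cinner_minus_right)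
qed

lemma two_scale: "scaleC 2 (x::'a::complex_vector) = x + x"
  using scaleC_add_left[of 1 1 x] by (simp add: scaleC_one)

lemma proj_exists:
  fixes y :: "'a::chilbert_space"
  assumes sub: "csubspace K" and cl: "hclosed K"
  shows "\<exists>v\<in>K. orth K (y - v)"
proof -
  define Q where "Q = (\<lambda>z::'a. Re (cinner z z))"
  have Qnn: "0 \<le> Q z" for z unfolding Q_def by (rule cinner_self_nonneg)
  define S where "S = (\<lambda>k. Q (y - k)) ` K"
  define D where "D = Inf S"
  have K0: "0 \<in> K" using sub unfolding csubspace_def by blast
  have Sne: "S \<noteq> {}" unfolding S_def using K0 by blast
  have bdd: "bdd_below S" unfolding S_def bdd_below_def using Qnn by blast
  have Dle: "D \<le> Q (y - k)" if "k \<in> K" for k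
    unfolding D_def using bdd that unfolding S_def by (simp add: cInf_lower)
  have D0: "0 \<le> D" unfolding D_def using Sne Qnn unfolding S_def by (simp add: le_cInf_iff bdd[unfolded S_def])
  have "\<forall>n::nat. \<exists>k\<in>K. Q (y - k) < D + 1 / (real n + 1)"
  proof
    fix n :: nat
    have "Inf S < D + 1 / (real n + 1)" unfolding D_def by (simp add: add_pos_pos)
    from cInf_lessD[OF Sne this] show "\<exists>k\<in>K. Q (y - k) < D + 1 / (real n + 1)" unfolding S_def by blast
  qed
  then obtain kk where kkK: "\<And>n. kk n \<in> K" and kkQ: "\<And>n. Q (y - kk n) < D + 1 / (real n + 1)"
    by metis
  have addK: "x + z \<in> K" if "x \<in> K" "z \<in> K" for x z using sub that unfolding csubspace_def by blast
  have scK: "scaleC c x \<in> K" if "x \<in> K" for c x using sub that unfolding csubspace_def by blast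
  have diffK: "x - z \<in> K" if "x \<in> K" "z \<in> K" for x z
  proof -
    have "scaleC (-1) z \<in> K" using scK that by blast
    hence "- z \<in> K" by (simp add: scaleC_minus1)
    hence "x + - z \<in> K" using addK that by blast
    thus ?thesis by simp
  qed
  have cauchyQ: "Q (kk m - kk n) \<le> 2 / (real m + 1) + 2 / (real n + 1)" for m n
  proof -
    define a where "a = y - kk m"
    define b where "b = y - kk n"
    define mid where "mid = scaleC (1/2) (kk m + kk n)"
    have midK: "mid \<in> K" unfolding mid_def using kkK addK scK by blast
    have ab: "a + b = scaleC 2 (y - mid)"
    proof -
      have "scaleC 2 (y - mid) = scaleC 2 y - scaleC 2 mid" by (rule scaleC_diff_right)
      also have "scaleC 2 mid = kk m + kk n" unfolding mid_def by (simp add: scaleC_scaleC scaleC_one)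
      finally show ?thesis unfolding a_def b_def two_scale by (simp add: algebra_simps)
    qed
    have "Q (a + b) = 4 * Q (y - mid)" unfolding ab Q_def Q_scale by simp
    moreover have "Q (a - b) + Q (a + b) = 2 * Q a + 2 * Q b" unfolding Q_def by (rule parallelogram)
    moreover have "Q (a - b) = Q (kk m - kk n)"
    proof -
      have "a - b = - (kk m - kk n)" unfolding a_def b_def by simp
      hence "cinner (a - b) (a - b) = cinner (kk m - kk n) (kk m - kk n)"
        by (simp only: cinner_minus_left cinner_minus_right minus_minus)
      thus ?thesis unfolding Q_def by simp
    qed
    moreover have "D \<le> Q (y - mid)" using Dle midK by blast
    moreover have "Q a < D + 1 / (real m + 1)" unfolding a_def by (rule kkQ)
    moreover have "Q b < D + 1 / (real n + 1)" unfolding b_def by (rule kkQ)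
    ultimately show ?thesis by linarith
  qed
  have "\<forall>e>0. \<exists>N. \<forall>m\<ge>N. \<forall>n\<ge>N. hnorm (kk m - kk n) < e"
  proof (intro allI impI)
    fix e :: real assume e: "e > 0"
    obtain N :: nat where N: "4 / e^2 < real N" using reals_Archimedean2 by blast
    have "\<forall>m\<ge>N. \<forall>n\<ge>N. hnorm (kk m - kk n) < e"
    proof (intro allI impI)
      fix m n assume mn: "N \<le> m" "N \<le> n"
      have "2 / (real m + 1) \<le> 2 / (real N + 1)" using mn by (simp add: frac_le)
      moreover have "2 / (real n + 1) \<le> 2 / (real N + 1)" using mn by (simp add: frac_le)
      moreover have "4 / (real N + 1) < e^2"
      proof -
        have "4 / e^2 < real N + 1" using N by simp
        thus ?thesis using e by (simp add: field_simps)
      qed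
      ultimately have "Q (kk m - kk n) < e^2" using cauchyQ[of m n] by simp
      hence "(hnorm (kk m - kk n))^2 < e^2" unfolding Q_def hnorm_sq .
      thus "hnorm (kk m - kk n) < e" by (rule power2_less_imp_less) (use e in simp)
    qed
    thus "\<exists>N. \<forall>m\<ge>N. \<forall>n\<ge>N. hnorm (kk m - kk n) < e" by blast
  qed
  from hcomplete[OF this] obtain L where L: "hconv kk L" by blast
  have LK: "L \<in> K" using cl kkK L unfolding hclosed_def by blast
  have QL: "Q (y - L) \<le> D"
  proof (rule ccontr)
    assume "\<not> Q (y - L) \<le> D"
    hence gt: "hnorm (y - L) > sqrt D" unfolding Q_def hnorm_def by simp
    define del where "del = hnorm (y - L) - sqrt D"
    have del: "del > 0" using gt unfolding del_def by simp
    obtain N1 where N1: "\<forall>n\<ge>N1. hnorm (kk n - L) < del / 2" using L del unfolding hconv_def by (meson half_gt_zero)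
    obtain N2 :: nat where N2: "4 / del^2 < real N2" using reals_Archimedean2 by blast
    define n where "n = max N1 N2"
    have h1: "hnorm (kk n - L) < del / 2" using N1 unfolding n_def by simp
    have "4 / del^2 < real n + 1" using N2 unfolding n_def by simp
    hence "1 / (real n + 1) < (del/2)^2" using del by (simp add: field_simps power2_eq_square)
    hence h2: "sqrt (1 / (real n + 1)) < del / 2" using del
      by (metis abs_of_pos half_gt_zero real_sqrt_abs real_sqrt_less_mono)
    have "hnorm (y - L) \<le> hnorm (y - kk n) + hnorm (kk n - L)"
      using hnorm_triangle[of "y - kk n" "kk n - L"] by simp
    also have "hnorm (y - kk n) \<le> sqrt (D + 1 / (real n + 1))"
      unfolding hnorm_def using kkQ[of n] unfolding Q_def by simp
    also have "sqrt (D + 1 / (real n + 1)) \<le> sqrt D + sqrt (1 / (real n + 1))"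
      by (rule sqrt_add_le_add_sqrt) (use D0 in auto)
    finally have "hnorm (y - L) < sqrt D + del / 2 + del / 2" using h1 h2 by linarith
    thus False unfolding del_def by simp
  qed
  have "orth K (y - L)" unfolding orth_def
  proof
    fix k assume kK: "k \<in> K"
    show "cinner k (y - L) = 0"
    proof (rule min_orth, rule allI)
      fix c
      have "L + scaleC c k \<in> K" using LK kK addK scK by blast
      hence "D \<le> Q (y - (L + scaleC c k))" by (rule Dle)
      moreover have "y - (L + scaleC c k) = (y - L) - scaleC c k" by simp
      ultimately show "Re (cinner (y - L) (y - L)) \<le> Re (cinner (y - L - scaleC c k) (y - L - scaleC c k))"
        using QL unfolding Q_def by simp
    qed
  qed
  thus ?thesis using LK by blast
qed



definition lin :: "('a::complex_vector \<Rightarrow> 'a) \<Rightarrow> bool" where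
  "lin T \<longleftrightarrow> (\<forall>x y. T (x + y) = T x + T y) \<and> (\<forall>c x. T (scaleC c x) = scaleC c (T x))"
definition herm :: "('a::complex_inner \<Rightarrow> 'a) \<Rightarrow> bool" where
  "herm T \<longleftrightarrow> (\<forall>x y. cinner (T x) y = cinner x (T y))"

lemma bounded_lin: "bounded_op T \<Longrightarrow> lin T"
  unfolding bounded_op_def lin_def by blast
lemma lin_add: "lin T \<Longrightarrow> T (x + y) = T x + T y" unfolding lin_def by blast
lemma lin_scale: "lin T \<Longrightarrow> T (scaleC c x) = scaleC c (T x)" unfolding lin_def by blast
lemma lin_zero: "lin T \<Longrightarrow> T 0 = 0"
  using lin_scale[of T 0 0] by simp
lemma lin_minus: "lin T \<Longrightarrow> T (- x) = - T x"
  using lin_scale[of T "-1" x] by (simp add: scaleC_minus1)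
lemma lin_diff: "lin T \<Longrightarrow> T (x - y) = T x - T y"
  using lin_add[of T x "-y"] lin_minus[of T y] by simp

lemma sesq_zero:
  fixes B :: "'a::complex_vector \<Rightarrow> 'a \<Rightarrow> complex"
  assumes al: "\<And>x y z. B (x + y) z = B x z + B y z"
    and ar: "\<And>x y z. B x (y + z) = B x y + B x z"
    and sl: "\<And>c x y. B (scaleC c x) y = cnj c * B x y"
    and sr: "\<And>c x y. B x (scaleC c y) = c * B x y"
    and dz: "\<And>x. B x x = 0"
  shows "B x y = 0"
proof -
  have "B x y + B y x = B (x + y) (x + y)" by (simp add: al ar dz[of x] dz[of y])
  also have "\<dots> = 0" by (rule dz)
  finally have e1: "B x y + B y x = 0" .
  have "\<i> * B x y - \<i> * B y x = B (x + scaleC \<i> y) (x + scaleC \<i> y)"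
    by (simp add: al ar sl sr dz[of x] dz[of y])
  also have "\<dots> = 0" by (rule dz)
  finally have "\<i> * B x y - \<i> * B y x = 0" .
  hence "B x y = B y x" by (simp add: right_diff_distrib[symmetric])
  with e1 show ?thesis by simp
qed

lemma lin_quad_zero:
  fixes T :: "'a::complex_inner \<Rightarrow> 'a"
  assumes "lin T" "\<And>x. cinner (T x) x = 0"
  shows "T x = 0"
proof -
  have "cinner (T x) (T x) = 0"
    by (rule sesq_zero[where B="\<lambda>x y. cinner (T x) y"])
       (use assms in \<open>simp_all add: lin_add lin_scale cinner_add_left cinner_add_right cinner_scaleC_left cinner_scaleC_right\<close>)
  thus ?thesis using cinner_self_eq_zero by blast
qed

lemma herm_of_real:
  fixes T :: "'a::complex_inner \<Rightarrow> 'a"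
  assumes "lin T" "\<And>x. Im (cinner (T x) x) = 0"
  shows "herm T"
  unfolding herm_def
proof (intro allI)
  fix x y
  have "cinner (T x) y - cinner x (T y) = 0"
  proof (rule sesq_zero[where B="\<lambda>x y. cinner (T x) y - cinner x (T y)"])
    fix x
    have "cinner x (T x) = cnj (cinner (T x) x)" by (rule cinner_commute)
    also have "\<dots> = cinner (T x) x" using assms(2)[of x] by (simp add: complex_eq_iff)
    finally show "cinner (T x) x - cinner x (T x) = 0" by simp
  qed (use assms(1) in \<open>simp_all add: lin_add lin_scale cinner_add_left cinner_add_right cinner_scaleC_left cinner_scaleC_right algebra_simps\<close>)
  thus "cinner (T x) y = cinner x (T y)" by simp
qed

lemma op_pos_herm: "lin T \<Longrightarrow> op_pos T \<Longrightarrow> herm T"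
  by (rule herm_of_real) (auto simp: op_pos_def)

lemma adj_unique:
  fixes T :: "'a::complex_inner \<Rightarrow> 'a"
  assumes "\<forall>x y. cinner (T x) y = cinner x (S y)" "\<forall>x y. cinner (T x) y = cinner x (S' y)"
  shows "S = S'"
proof
  fix y
  have "cinner x (S y - S' y) = 0" for x using assms by (simp add: cinner_diff_right)
  thus "S y = S' y" using cinner_self_eq_zero by (metis eq_iff_diff_eq_0)
qed

lemma adj_prop:
  fixes T :: "'h::chilbert_space \<Rightarrow> 'h"
  assumes "\<exists>S. \<forall>x y. cinner (T x) y = cinner x (S y)"
  shows "\<forall>x y. cinner (T x) y = cinner x (adj T y)"
  unfolding adj_def using someI_ex[OF assms] .

lemma herm_adj: "herm (T::'h::chilbert_space \<Rightarrow> 'h) \<Longrightarrow> adj T = T"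
proof -
  assume h: "herm T"
  hence ex: "\<forall>x y. cinner (T x) y = cinner x (T y)" unfolding herm_def .
  hence "\<forall>x y. cinner (T x) y = cinner x (adj T y)" using adj_prop by blast
  thus ?thesis using adj_unique ex by metis
qed

lemma bounded_conv:
  fixes T :: "'a::chilbert_space \<Rightarrow> 'a"
  assumes "bounded_op T" "hconv X L"
  shows "hconv (\<lambda>n. T (X n)) (T L)"
  unfolding hconv_def
proof (intro allI impI)
  fix e :: real assume e: "e > 0"
  obtain Kb where Kb: "\<And>x. hnorm (T x) \<le> Kb * hnorm x" using assms(1) unfolding bounded_op_def by blast
  define C where "C = \<bar>Kb\<bar> + 1"
  have C: "C > 0" unfolding C_def by simp
  obtain N where N: "\<forall>n\<ge>N. hnorm (X n - L) < e / C" using assms(2) C e unfolding hconv_def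
    by (meson divide_pos_pos)
  have "hnorm (T (X n) - T L) < e" if "n \<ge> N" for n
  proof -
    have lT: "lin T" using assms(1) by (rule bounded_lin)
    have "hnorm (T (X n) - T L) = hnorm (T (X n - L))" using lT by (simp add: lin_diff)
    also have "\<dots> \<le> Kb * hnorm (X n - L)" by (rule Kb)
    also have "\<dots> \<le> C * hnorm (X n - L)" unfolding C_def using hnorm_nonneg[of "X n - L"]
      by (intro mult_right_mono) auto
    also have "\<dots> < C * (e / C)" using N that C by (intro mult_strict_left_mono) auto
    also have "\<dots> = e" using C by simp
    finally show ?thesis .
  qed
  thus "\<exists>N. \<forall>n\<ge>N. hnorm (T (X n) - T L) < e" by blast
qed

lemma cinner_conv:
  fixes y :: "'a::complex_inner"
  assumes "hconv X L" "e > 0"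
  shows "\<exists>N. \<forall>n\<ge>N. cmod (cinner y (X n) - cinner y L) < e"
proof -
  define C where "C = hnorm y + 1"
  have C: "C > 0" unfolding C_def using hnorm_nonneg[of y] by simp
  obtain N where N: "\<forall>n\<ge>N. hnorm (X n - L) < e / C" using assms C unfolding hconv_def
    by (meson divide_pos_pos)
  have "cmod (cinner y (X n) - cinner y L) < e" if "n \<ge> N" for n
  proof -
    have "cmod (cinner y (X n) - cinner y L) = cmod (cinner y (X n - L))" by (simp add: cinner_diff_right)
    also have "\<dots> \<le> hnorm y * hnorm (X n - L)" by (rule cauchy_schwarz)
    also have "\<dots> \<le> C * hnorm (X n - L)" unfolding C_def using hnorm_nonneg[of "X n - L"]
      by (intro mult_right_mono) auto
    also have "\<dots> < C * (e / C)" using N that C by (intro mult_strict_left_mono) auto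
    also have "\<dots> = e" using C by simp
    finally show ?thesis .
  qed
  thus ?thesis by blast
qed

lemma small_zero_c: "(\<And>e. e > 0 \<Longrightarrow> cmod z < e) \<Longrightarrow> z = 0"
  by (metis less_irrefl zero_less_norm_iff)
lemma small_zero_h: "(\<And>e. e > 0 \<Longrightarrow> hnorm (z::'a::complex_inner) < e) \<Longrightarrow> z = 0"
  by (metis hnorm_nonneg hnorm_zero_iff less_irrefl order_le_less)

lemma ker_closed:
  fixes T :: "'a::chilbert_space \<Rightarrow> 'a"
  assumes "bounded_op T"
  shows "hclosed {z. T z = 0}" "csubspace {z. T z = 0}"
proof -
  have lT: "lin T" using assms by (rule bounded_lin)
  show "csubspace {z. T z = 0}" unfolding csubspace_def using lT
    by (simp add: lin_zero lin_add lin_scale)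
  show "hclosed {z. T z = 0}" unfolding hclosed_def
  proof (intro allI impI)
    fix X L assume X: "\<forall>n. X n \<in> {z. T z = 0}" and c: "hconv X L"
    have "hconv (\<lambda>n. T (X n)) (T L)" by (rule bounded_conv[OF assms c])
    hence "T L = 0"
    proof -
      assume cc: "hconv (\<lambda>n. T (X n)) (T L)"
      show ?thesis
      proof (rule small_zero_h)
        fix e :: real assume "e > 0"
        then obtain N where "\<forall>n\<ge>N. hnorm (T (X n) - T L) < e" using cc unfolding hconv_def by blast
        hence "hnorm (0 - T L) < e" using X by auto
        thus "hnorm (T L) < e" by (simp add: hnorm_minus)
      qed
    qed
    thus "L \<in> {z. T z = 0}" by simp
  qed
qed

lemma riesz_adj:
  fixes T :: "'a::chilbert_space \<Rightarrow> 'a"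
  assumes bT: "bounded_op T"
  shows "\<exists>S. \<forall>x y. cinner (T x) y = cinner x (S y)"
proof -
  have lT: "lin T" using bT by (rule bounded_lin)
  have "\<exists>z. \<forall>x. cinner y (T x) = cinner z x" for y
  proof -
    define f where "f = (\<lambda>x. cinner y (T x))"
    have fadd: "f (a + b) = f a + f b" for a b unfolding f_def using lT by (simp add: lin_add cinner_add_right)
    have fsc: "f (scaleC c a) = c * f a" for c a unfolding f_def using lT by (simp add: lin_scale cinner_scaleC_right)
    have fdiff: "f (a - b) = f a - f b" for a b unfolding f_def using lT by (simp add: lin_diff cinner_diff_right)
    define K where "K = {z. f z = 0}"
    have subK: "csubspace K" unfolding csubspace_def K_def
      using fadd fsc fdiff[of 0 0] by simp
    have clK: "hclosed K" unfolding hclosed_def K_def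
    proof (intro allI impI)
      fix X L assume X: "\<forall>n. X n \<in> {z. f z = 0}" and c: "hconv X L"
      have cT: "hconv (\<lambda>n. T (X n)) (T L)" by (rule bounded_conv[OF bT c])
      have "f L = 0"
      proof (rule small_zero_c)
        fix e :: real assume "e > 0"
        from cinner_conv[OF cT this, of y] obtain N where "\<forall>n\<ge>N. cmod (f (X n) - f L) < e"
          unfolding f_def by blast
        hence "cmod (0 - f L) < e" using X by auto
        thus "cmod (f L) < e" by simp
      qed
      thus "L \<in> {z. f z = 0}" by simp
    qed
    show ?thesis
    proof (cases "\<forall>x. f x = 0")
      case True
      thus ?thesis unfolding f_def by (intro exI[of _ 0]) simp
    next
      case False
      then obtain z0 where z0: "f z0 \<noteq> 0" by blast
      obtain v where vK: "v \<in> K" and vo: "orth K (z0 - v)" using proj_exists[OF subK clK] by blast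
      define u where "u = z0 - v"
      have fu: "f u \<noteq> 0" unfolding u_def using fdiff vK z0 unfolding K_def by simp
      have u0: "u \<noteq> 0" using fu fsc[of 0 0] by auto
      have uu: "cinner u u \<noteq> 0" using u0 cinner_self_eq_zero by blast
      have key: "f x * cinner u u = f u * cinner u x" for x
      proof -
        have "scaleC (f x) u - scaleC (f u) x \<in> K" unfolding K_def using fdiff fsc by (simp add: mult.commute)
        hence "cinner (scaleC (f x) u - scaleC (f u) x) u = 0" using vo unfolding orth_def u_def by blast
        hence "cinner u (scaleC (f x) u - scaleC (f u) x) = 0" by (metis cinner_commute complex_cnj_zero)
        thus ?thesis by (simp add: cinner_diff_right cinner_scaleC_right)
      qed
      define z where "z = scaleC (cnj (f u / cinner u u)) u"
      have "\<forall>x. f x = cinner z x"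
      proof
        fix x
        have "cinner z x = (f u / cinner u u) * cinner u x" unfolding z_def by (simp add: cinner_scaleC_left)
        also have "\<dots> = f x" using key[of x] uu by (simp add: field_simps)
        finally show "f x = cinner z x" by simp
      qed
      thus ?thesis unfolding f_def by blast
    qed
  qed
  then obtain S where S: "\<And>y x. cinner y (T x) = cinner (S y) x" by metis
  have "cinner (T x) y = cinner x (S y)" for x y
    by (metis S cinner_commute)
  thus ?thesis by blast
qed

lemma bounded_adj:
  fixes T :: "'a::chilbert_space \<Rightarrow> 'a"
  assumes "bounded_op T"
  shows "cinner (T x) y = cinner x (adj T y)"
  using adj_prop[OF riesz_adj[OF assms]] by blast



definition projK :: "'a::complex_inner set \<Rightarrow> 'a \<Rightarrow> 'a" where
  "projK K y = (SOME v. v \<in> K \<and> orth K (y - v))"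

lemma sub_add: "csubspace K \<Longrightarrow> x \<in> K \<Longrightarrow> y \<in> K \<Longrightarrow> x + y \<in> K" unfolding csubspace_def by blast
lemma sub_scale: "csubspace K \<Longrightarrow> x \<in> K \<Longrightarrow> scaleC c x \<in> K" unfolding csubspace_def by blast
lemma sub_zero: "csubspace K \<Longrightarrow> 0 \<in> K" unfolding csubspace_def by blast
lemma sub_minus: "csubspace K \<Longrightarrow> x \<in> K \<Longrightarrow> - x \<in> K"
  using sub_scale[of K x "-1"] by (simp add: scaleC_minus1)
lemma sub_diff: "csubspace K \<Longrightarrow> x \<in> K \<Longrightarrow> y \<in> K \<Longrightarrow> x - y \<in> K"
  using sub_add[of K x "-y"] sub_minus[of K y] by simp

lemma orth_add: "orth K x \<Longrightarrow> orth K y \<Longrightarrow> orth K (x + y)" unfolding orth_def by (simp add: cinner_add_right)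
lemma orth_diff: "orth K x \<Longrightarrow> orth K y \<Longrightarrow> orth K (x - y)" unfolding orth_def by (simp add: cinner_diff_right)
lemma orth_scale: "orth K x \<Longrightarrow> orth K (scaleC c x)" unfolding orth_def by (simp add: cinner_scaleC_right)
lemma orth_zero: "orth K 0" unfolding orth_def by simp
lemma orth_self: "orth K x \<Longrightarrow> x \<in> K \<Longrightarrow> x = 0" unfolding orth_def using cinner_self_eq_zero by blast
lemma orth_sym: "orth K x \<Longrightarrow> k \<in> K \<Longrightarrow> cinner x k = 0" unfolding orth_def
  by (metis cinner_commute complex_cnj_zero)

lemma cinner_ext: "(\<And>u. cinner u a = cinner u (b::'a::complex_inner)) \<Longrightarrow> a = b"
proof -
  assume h: "\<And>u. cinner u a = cinner u b"
  have "cinner (a - b) (a - b) = 0" using h[of "a - b"] by (simp add: cinner_diff_right)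
  hence "a - b = 0" using cinner_self_eq_zero by blast
  thus ?thesis by simp
qed

locale closed_sub =
  fixes K :: "'a::chilbert_space set"
  assumes sub: "csubspace K" and cl: "hclosed K"
begin

lemma ex: "\<exists>v. v \<in> K \<and> orth K (y - v)" using proj_exists[OF sub cl] by blast
lemma P_in: "projK K y \<in> K" unfolding projK_def using someI_ex[OF ex] by blast
lemma P_orth: "orth K (y - projK K y)" unfolding projK_def using someI_ex[OF ex] by blast
lemma P_unique: assumes "v \<in> K" "orth K (y - v)" shows "projK K y = v"
proof -
  have "projK K y - v \<in> K" using sub_diff[OF sub P_in assms(1)] .
  moreover have "orth K (projK K y - v)"
    using orth_diff[OF assms(2) P_orth[of y]] by simp
  ultimately show ?thesis using orth_self by fastforce
qed
lemma P_fix: "k \<in> K \<Longrightarrow> projK K k = k" by (rule P_unique) (auto simp: orth_zero)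
lemma P_orth_zero: "orth K y \<Longrightarrow> projK K y = 0" by (rule P_unique) (auto simp: sub_zero[OF sub])
lemma P_idem: "projK K (projK K y) = projK K y" by (rule P_fix[OF P_in])
lemma P_lin: "lin (projK K)" unfolding lin_def
proof (intro conjI allI)
  fix x y
  show "projK K (x + y) = projK K x + projK K y"
    apply (rule P_unique)
    apply (rule sub_add[OF sub P_in P_in])
    using orth_add[OF P_orth[of x] P_orth[of y]] by (simp add: algebra_simps)
next
  fix c x
  show "projK K (scaleC c x) = scaleC c (projK K x)"
    apply (rule P_unique)
    apply (rule sub_scale[OF sub P_in])
    using orth_scale[OF P_orth[of x], of c] by (simp add: scaleC_diff_right)
qed
lemma P_herm: "herm (projK K)" unfolding herm_def
proof (intro allI)
  fix x y
  have "cinner (projK K x) y = cinner (projK K x) (projK K y) + cinner (projK K x) (y - projK K y)"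
    by (simp add: cinner_diff_right)
  also have "cinner (projK K x) (y - projK K y) = 0" using P_orth[of y] P_in[of x] unfolding orth_def by blast
  also have "cinner x (projK K y) = cinner (projK K x) (projK K y) + cinner (x - projK K x) (projK K y)"
    by (simp add: cinner_diff_left)
  moreover have "cinner (x - projK K x) (projK K y) = 0" using orth_sym[OF P_orth[of x] P_in[of y]] .
  ultimately show "cinner (projK K x) y = cinner x (projK K y)" by simp
qed
lemma P_pyth: "Re (cinner y y) = Re (cinner (projK K y) (projK K y)) + Re (cinner (y - projK K y) (y - projK K y))"
proof -
  have "Re (cinner (projK K y + (y - projK K y)) (projK K y + (y - projK K y))) =
     Re (cinner (projK K y) (projK K y)) + Re (cinner (y - projK K y) (y - projK K y)) + 2 * Re (cinner (projK K y) (y - projK K y))"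
    by (rule Re_cinner_expand)
  moreover have "cinner (projK K y) (y - projK K y) = 0" using P_orth[of y] P_in[of y] unfolding orth_def by blast
  ultimately show ?thesis by simp
qed
lemma P_contr: "Re (cinner (projK K y) (projK K y)) \<le> Re (cinner y y)"
  using P_pyth[of y] cinner_self_nonneg[of "y - projK K y"] by linarith
lemma Q_contr: "Re (cinner (y - projK K y) (y - projK K y)) \<le> Re (cinner y y)"
  using P_pyth[of y] cinner_self_nonneg[of "projK K y"] by linarith

lemma P_commute:
  assumes "lin T" "\<And>k. k \<in> K \<Longrightarrow> T k \<in> K" "\<And>w. orth K w \<Longrightarrow> orth K (T w)"
  shows "projK K (T y) = T (projK K y)"
proof (rule P_unique)
  show "T (projK K y) \<in> K" using assms(2) P_in by blast
  have "orth K (T (y - projK K y))" using assms(3) P_orth by blast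
  thus "orth K (T y - T (projK K y))" using assms(1) by (simp add: lin_diff)
qed

end

lemma herm_pres_orth:
  assumes "herm T" "\<And>k. k \<in> K \<Longrightarrow> T k \<in> K" "orth K w"
  shows "orth K (T w)"
  unfolding orth_def
proof
  fix k assume "k \<in> K"
  have "cinner k (T w) = cinner (T k) w" using assms(1) unfolding herm_def by simp
  also have "\<dots> = 0" using assms(2,3) \<open>k \<in> K\<close> unfolding orth_def by blast
  finally show "cinner k (T w) = 0" .
qed

lemma ker_sub: "bounded_op (T::'a::chilbert_space \<Rightarrow> 'a) \<Longrightarrow> closed_sub {z. T z = 0}"
  unfolding closed_sub_def using ker_closed by blast

lemma vn_bounded: "von_neumann_algebra M \<Longrightarrow> A \<in> M \<Longrightarrow> bounded_op A"
  unfolding von_neumann_algebra_def by blast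
lemma vn_lin: "von_neumann_algebra M \<Longrightarrow> A \<in> M \<Longrightarrow> lin A"
  using vn_bounded bounded_lin by blast
lemma vn_id: "von_neumann_algebra M \<Longrightarrow> id \<in> M"
  unfolding von_neumann_algebra_def by blast
lemma vn_add: "von_neumann_algebra M \<Longrightarrow> A \<in> M \<Longrightarrow> B \<in> M \<Longrightarrow> op_add A B \<in> M"
  unfolding von_neumann_algebra_def by blast
lemma vn_comp: "von_neumann_algebra M \<Longrightarrow> A \<in> M \<Longrightarrow> B \<in> M \<Longrightarrow> A \<circ> B \<in> M"
  unfolding von_neumann_algebra_def by blast
lemma vn_sub: "von_neumann_algebra M \<Longrightarrow> A \<in> M \<Longrightarrow> B \<in> M \<Longrightarrow> op_sub A B \<in> M"
proof -
  assume vn: "von_neumann_algebra M" and A: "A \<in> M" and B: "B \<in> M"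
  have "(\<lambda>x. scaleC (-1) (B x)) \<in> M" using vn B unfolding von_neumann_algebra_def by blast
  hence "op_add A (\<lambda>x. scaleC (-1) (B x)) \<in> M" using vn_add[OF vn A] by blast
  moreover have "op_add A (\<lambda>x. scaleC (-1) (B x)) = op_sub A B"
    unfolding op_add_def op_sub_def by (simp add: scaleC_minus1)
  ultimately show ?thesis by simp
qed
lemma vn_bicomm: "von_neumann_algebra M \<Longrightarrow> bounded_op P \<Longrightarrow> (\<And>T. T \<in> commutant M \<Longrightarrow> P \<circ> T = T \<circ> P) \<Longrightarrow> P \<in> M"
proof -
  assume vn: "von_neumann_algebra M" and b: "bounded_op P" and c: "\<And>T. T \<in> commutant M \<Longrightarrow> P \<circ> T = T \<circ> P"
  have "P \<in> commutant (commutant M)" unfolding commutant_def[of "commutant M"] using b c by auto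
  thus ?thesis using vn unfolding von_neumann_algebra_def by simp
qed

lemma op_le_antisym:
  fixes A B :: "'a::chilbert_space \<Rightarrow> 'a"
  assumes "lin A" "lin B" "op_le A B" "op_le B A"
  shows "A = B"
proof
  fix y
  have l: "lin (op_sub B A)" using assms(1,2) unfolding lin_def op_sub_def
    by (simp add: scaleC_diff_right algebra_simps)
  have "op_sub B A y = 0"
  proof (rule lin_quad_zero[OF l])
    fix x
    have p1: "Im (cinner (B x - A x) x) = 0" "0 \<le> Re (cinner (B x - A x) x)"
      using assms(3) unfolding op_le_def op_pos_def op_sub_def by auto
    have "0 \<le> Re (cinner (A x - B x) x)"
      using assms(4) unfolding op_le_def op_pos_def op_sub_def by auto
    hence "0 \<le> - Re (cinner (B x - A x) x)" by (simp add: cinner_diff_left)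
    with p1 show "cinner (op_sub B A x) x = 0" unfolding op_sub_def by (simp add: complex_eq_iff)
  qed
  thus "A y = B y" unfolding op_sub_def by simp
qed



definition rpr :: "('a::chilbert_space \<Rightarrow> 'a) \<Rightarrow> 'a \<Rightarrow> 'a" where
  "rpr x = (\<lambda>y. y - projK {z. x z = 0} y)"

locale rp_setup =
  fixes M :: "('h::chilbert_space \<Rightarrow> 'h) set" and x :: "'h \<Rightarrow> 'h"
  assumes vn: "von_neumann_algebra M" and xM: "x \<in> M" and hx: "herm x"
begin

abbreviation "Kx \<equiv> {z. x z = 0}"
abbreviation "P \<equiv> rpr x"

lemma bx: "bounded_op x" using vn_bounded[OF vn xM] .
lemma lx: "lin x" using bounded_lin[OF bx] .
lemma cs: "closed_sub Kx" using ker_sub[OF bx] .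

lemma P_lin: "lin P"
  using closed_sub.P_lin[OF cs] unfolding rpr_def lin_def
  by (simp add: scaleC_diff_right algebra_simps)

lemma P_herm: "herm P"
  using closed_sub.P_herm[OF cs] unfolding rpr_def herm_def
  by (simp add: cinner_diff_left cinner_diff_right)

lemma P_idem: "P (P y) = P y"
proof -
  have "projK Kx (y - projK Kx y) = 0"
    using closed_sub.P_lin[OF cs] closed_sub.P_idem[OF cs] by (simp add: lin_diff)
  thus ?thesis unfolding rpr_def by simp
qed

lemma P_orth: "orth Kx (P y)" unfolding rpr_def by (rule closed_sub.P_orth[OF cs])

lemma P_bounded: "bounded_op P"
  unfolding bounded_op_def
proof (intro conjI)
  show "\<forall>x y. P (x + y) = P x + P y" using P_lin unfolding lin_def by blast
  show "\<forall>c y. P (scaleC c y) = scaleC c (P y)" using P_lin unfolding lin_def by blast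
  have "hnorm (P y) \<le> 1 * hnorm y" for y
    using closed_sub.Q_contr[OF cs, of y] unfolding rpr_def hnorm_def by simp
  thus "\<exists>K. \<forall>y. hnorm (P y) \<le> K * hnorm y" by blast
qed

lemma P_x: "P (x y) = x y"
proof -
  have "orth Kx (x y)" unfolding orth_def
  proof
    fix k assume "k \<in> Kx"
    hence "x k = 0" by simp
    thus "cinner k (x y) = 0" using hx unfolding herm_def by (metis cinner_zero_left)
  qed
  hence "projK Kx (x y) = 0" by (rule closed_sub.P_orth_zero[OF cs])
  thus ?thesis unfolding rpr_def by simp
qed

lemma P_comp_x: "P \<circ> x = x" using P_x by auto

lemma x_P: "x (P y) = x y"
proof -
  have "x (projK Kx y) = 0" using closed_sub.P_in[OF cs] by simp
  thus ?thesis unfolding rpr_def using lx by (simp add: lin_diff)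
qed

lemma P_M: "P \<in> M"
proof (rule vn_bicomm[OF vn P_bounded])
  fix T assume T: "T \<in> commutant M"
  hence bT: "bounded_op T" and Tx: "T \<circ> x = x \<circ> T" unfolding commutant_def using xM by auto
  have lT: "lin T" by (rule bounded_lin[OF bT])
  define S where "S = adj T"
  have S: "cinner (T u) v = cinner u (S v)" for u v unfolding S_def by (rule bounded_adj[OF bT])
  have Txx: "T (x u) = x (T u)" for u using Tx by (metis comp_apply)
  have Sx: "x (S v) = S (x v)" for v
  proof (rule cinner_ext)
    fix u
    have "cinner u (x (S v)) = cinner (x u) (S v)" using hx unfolding herm_def by simp
    also have "\<dots> = cinner (T (x u)) v" by (simp add: S)
    also have "\<dots> = cinner (x (T u)) v" by (simp add: Txx)
    also have "\<dots> = cinner (T u) (x v)" using hx unfolding herm_def by simp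
    also have "\<dots> = cinner u (S (x v))" by (simp add: S)
    finally show "cinner u (x (S v)) = cinner u (S (x v))" .
  qed
  have TK: "T k \<in> Kx" if "k \<in> Kx" for k
  proof -
    have "x (T k) = T (x k)" by (simp add: Txx)
    also have "x k = 0" using that by simp
    finally show ?thesis using lin_zero[OF lT] by simp
  qed
  have SK: "S k \<in> Kx" if "k \<in> Kx" for k
  proof -
    have "x k = 0" using that by simp
    hence "x (S k) = S 0" using Sx[of k] by simp
    also have "S 0 = 0" by (rule cinner_ext) (simp add: S[symmetric])
    finally show ?thesis by simp
  qed
  have TO: "orth Kx (T w)" if "orth Kx w" for w unfolding orth_def
  proof
    fix k assume k: "k \<in> Kx"
    have "cinner (T w) k = cinner w (S k)" by (rule S)
    also have "\<dots> = 0" using orth_sym[OF that SK[OF k]] .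
    finally have "cinner (T w) k = 0" .
    moreover have "cinner k (T w) = cnj (cinner (T w) k)" by (rule cinner_commute)
    ultimately show "cinner k (T w) = 0" by simp
  qed
  have "projK Kx (T y) = T (projK Kx y)" for y
    by (rule closed_sub.P_commute[OF cs lT]) (use TK TO in auto)
  hence "P (T y) = T (P y)" for y unfolding rpr_def using lT by (simp add: lin_diff)
  thus "P \<circ> T = T \<circ> P" by auto
qed

lemma P_proj: "is_proj_in M P"
  unfolding is_proj_in_def using P_M P_idem herm_adj[OF P_herm] by auto

lemma P_min:
  assumes q: "is_proj_in M q" and qx: "q \<circ> x = x"
  shows "op_le P q"
proof -
  have qM: "q \<in> M" and qq: "q \<circ> q = q" and aq: "adj q = q" using q unfolding is_proj_in_def by auto
  have bq: "bounded_op q" using vn_bounded[OF vn qM] .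
  have lq: "lin q" using bounded_lin[OF bq] .
  have hq: "cinner (q u) v = cinner u (q v)" for u v using bounded_adj[OF bq, of u v] aq by simp
  have qqu: "q (q u) = q u" for u using qq by (metis comp_apply)
  have qxu: "q (x u) = x u" for u using qx by (metis comp_apply)
  have a: "x (u - q u) = 0" for u
  proof -
    have "cinner z (x (u - q u)) = 0" for z
    proof -
      have "cinner z (x (u - q u)) = cinner (x z) (u - q u)" using hx unfolding herm_def by simp
      also have "\<dots> = cinner (x z) u - cinner (q (x z)) u" by (simp add: cinner_diff_right hq)
      also have "\<dots> = 0" by (simp add: qxu)
      finally show ?thesis .
    qed
    thus ?thesis using cinner_self_eq_zero by blast
  qed
  have qP: "q (P y) = P y" for y
  proof -
    define w where "w = P y"
    define d where "d = w - q w"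
    have dK: "d \<in> Kx" unfolding d_def using a by simp
    have qd: "q d = 0" unfolding d_def using lq qqu by (simp add: lin_diff)
    have "cinner d d = cinner w d - cinner (q w) d" unfolding d_def by (simp add: cinner_diff_left)
    also have "cinner (q w) d = 0" using hq qd by simp
    also have "cinner w d = 0" using orth_sym[OF P_orth dK] unfolding w_def .
    finally have "cinner d d = 0" by simp
    hence "d = 0" using cinner_self_eq_zero by blast
    thus ?thesis unfolding d_def w_def by simp
  qed
  have Pq: "P (q y) = P y" for y
  proof (rule cinner_ext)
    fix u
    have "cinner u (P (q y)) = cinner (P u) (q y)" using P_herm unfolding herm_def by simp
    also have "\<dots> = cinner (q (P u)) y" by (simp add: hq)
    also have "\<dots> = cinner (P u) y" by (simp add: qP)
    also have "\<dots> = cinner u (P y)" using P_herm unfolding herm_def by simp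
    finally show "cinner u (P (q y)) = cinner u (P y)" .
  qed
  show ?thesis unfolding op_le_def op_pos_def op_sub_def
  proof (intro allI conjI)
    fix y
    have e1: "cinner (q y) y = cinner (q y) (q y)" using hq qqu by metis
    have e2: "cinner (P y) y = cinner (P y) (P y)" using P_herm P_idem unfolding herm_def by metis
    have "Re (cinner (P (q y)) (P (q y))) \<le> Re (cinner (q y) (q y))"
      using closed_sub.Q_contr[OF cs, of "q y"] unfolding rpr_def by simp
    hence le: "Re (cinner (P y) (P y)) \<le> Re (cinner (q y) (q y))" using Pq by simp
    have eq: "cinner (q y - P y) y = cinner (q y) (q y) - cinner (P y) (P y)"
      by (simp add: cinner_diff_left e1 e2)
    have i1: "Im (cinner (q y) (q y)) = 0" by (rule cinner_self_real)
    have i2: "Im (cinner (P y) (P y)) = 0" by (rule cinner_self_real)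
    show "Im (cinner (q y - P y) y) = 0" unfolding eq using i1 i2 by simp
    show "0 \<le> Re (cinner (q y - P y) y)" unfolding eq using le by simp
  qed
qed

lemma range_proj_is: "range_proj M x = P"
  unfolding range_proj_def
proof (rule the_equality)
  have a: "\<forall>q. is_proj_in M q \<and> q \<circ> x = x \<longrightarrow> op_le P q"
  proof (intro allI impI)
    fix q assume "is_proj_in M q \<and> q \<circ> x = x"
    hence "is_proj_in M q" "q \<circ> x = x" by simp_all
    thus "op_le P q" by (rule P_min)
  qed
  show "is_proj_in M P \<and> P \<circ> x = x \<and> (\<forall>q. is_proj_in M q \<and> q \<circ> x = x \<longrightarrow> op_le P q)"
    using P_proj P_comp_x a by simp
next
  fix p assume p: "is_proj_in M p \<and> p \<circ> x = x \<and> (\<forall>q. is_proj_in M q \<and> q \<circ> x = x \<longrightarrow> op_le p q)"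
  have pp: "is_proj_in M p" and px: "p \<circ> x = x" and pm: "\<forall>q. is_proj_in M q \<and> q \<circ> x = x \<longrightarrow> op_le p q"
    using p by auto
  have l1: "op_le P p" using P_min[OF pp px] .
  have l2: "op_le p P" using pm P_proj P_comp_x by simp
  have pM: "p \<in> M" using pp unfolding is_proj_in_def by simp
  have lp: "lin p" using vn_lin[OF vn pM] .
  show "p = P" using op_le_antisym[OF lp P_lin l2 l1] .
qed

end



lemma pos_null:
  fixes c :: "'a::chilbert_space \<Rightarrow> 'a"
  assumes lc: "lin c" and hc: "herm c" and pc: "op_pos c" and z: "cinner (c w) w = 0"
  shows "c w = 0"
proof -
  have key: "Re (cinner (c w) v) = 0" for v
  proof -
    have "\<forall>t. 0 \<le> 2 * t * Re (cinner (c w) v) + t^2 * Re (cinner (c v) v)"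
    proof
      fix t :: real
      define s where "s = complex_of_real t"
      have "0 \<le> Re (cinner (c (w + scaleC s v)) (w + scaleC s v))" using pc unfolding op_pos_def by blast
      also have "cinner (c (w + scaleC s v)) (w + scaleC s v) =
          cinner (c w) w + s * cinner (c w) v + cnj s * cinner (c v) w + cnj s * s * cinner (c v) v"
        using lc by (simp add: lin_add lin_scale cinner_add_left cinner_add_right cinner_scaleC_left cinner_scaleC_right algebra_simps)
      also have "cinner (c v) w = cnj (cinner (c w) v)"
        using hc unfolding herm_def by (metis cinner_commute)
      finally show "0 \<le> 2 * t * Re (cinner (c w) v) + t^2 * Re (cinner (c v) v)"
        unfolding s_def using z by (simp add: power2_eq_square)
    qed
    thus ?thesis by (rule quad_zero)
  qed
  have "cinner (c w) v = 0" for v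
  proof -
    have "Re (cinner (c w) (scaleC \<i> v)) = 0" by (rule key)
    hence "Im (cinner (c w) v) = 0" by (simp add: cinner_scaleC_right)
    thus ?thesis using key[of v] by (simp add: complex_eq_iff)
  qed
  thus ?thesis using cinner_self_eq_zero by blast
qed

definition isproj :: "('a::complex_inner \<Rightarrow> 'a) \<Rightarrow> bool" where
  "isproj p \<longleftrightarrow> lin p \<and> herm p \<and> (\<forall>y. p (p y) = p y)"

lemma corner_below:
  fixes c p :: "'a::chilbert_space \<Rightarrow> 'a"
  assumes lc: "lin c" and c0: "op_le op_zero c" and cp: "op_le c p" and pp: "isproj p"
  shows "c (y - p y) = 0" and "p (c y) = c y"
proof -
  have lp: "lin p" and hp: "herm p" and ip: "\<And>y. p (p y) = p y" using pp unfolding isproj_def by auto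
  have pc: "op_pos c" using c0 unfolding op_le_def op_sub_def op_zero_def by simp
  have hc: "herm c" using op_pos_herm[OF lc pc] .
  show cw: "c (y - p y) = 0" for y
  proof (rule pos_null[OF lc hc pc])
    define w where "w = y - p y"
    have pw: "p w = 0" unfolding w_def using lp ip by (simp add: lin_diff)
    have i1: "Im (cinner (c w) w) = 0" and r1: "0 \<le> Re (cinner (c w) w)" using pc unfolding op_pos_def by auto
    have "0 \<le> Re (cinner (p w - c w) w)" using cp unfolding op_le_def op_pos_def op_sub_def by blast
    hence "Re (cinner (c w) w) \<le> 0" using pw by (simp add: cinner_diff_left cinner_minus_left)
    hence "cinner (c w) w = 0" using i1 r1 by (simp add: complex_eq_iff)
    thus "cinner (c (y - p y)) (y - p y) = 0" unfolding w_def .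
  qed
  show "p (c y) = c y"
  proof -
    have "cinner u (c y - p (c y)) = 0" for u
    proof -
      have "cinner u (c y - p (c y)) = cinner (u - p u) (c y)"
        using hp unfolding herm_def by (simp add: cinner_diff_left cinner_diff_right)
      also have "\<dots> = cinner (c (u - p u)) y" using hc unfolding herm_def by simp
      also have "\<dots> = 0" using cw by simp
      finally show ?thesis .
    qed
    hence "c y - p (c y) = 0" using cinner_self_eq_zero by blast
    thus ?thesis by simp
  qed
qed

lemma corner_pos:
  fixes b p :: "'a::chilbert_space \<Rightarrow> 'a"
  assumes lb: "lin b" and b0: "op_le op_zero b" and b1: "op_le b id" and pp: "isproj p"
    and bp: "\<And>y. b (p y) = p (b y)"
  shows "op_le op_zero (b \<circ> p)" and "op_le (b \<circ> p) p"
proof -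
  have lp: "lin p" and hp: "herm p" and ip: "\<And>y. p (p y) = p y" using pp unfolding isproj_def by auto
  have pb: "op_pos b" using b0 unfolding op_le_def op_sub_def op_zero_def by simp
  have e1: "cinner (b (p y)) y = cinner (b (p y)) (p y)" for y
  proof -
    have "b (p y) = p (b (p y))" using bp ip by metis
    hence "cinner (b (p y)) y = cinner (p (b (p y))) y" by simp
    also have "\<dots> = cinner (b (p y)) (p y)" using hp unfolding herm_def by simp
    finally show ?thesis .
  qed
  show "op_le op_zero (b \<circ> p)" unfolding op_le_def op_pos_def op_sub_def op_zero_def
    using pb unfolding op_pos_def by (simp add: e1)
  have e2: "cinner (p y - b (p y)) y = cinner (p y - b (p y)) (p y)" for y
  proof -
    have "cinner (p y) y = cinner (p y) (p y)" using hp ip unfolding herm_def by metis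
    thus ?thesis using e1[of y] by (simp add: cinner_diff_left)
  qed
  show "op_le (b \<circ> p) p" unfolding op_le_def op_pos_def op_sub_def
    using b1 unfolding op_le_def op_pos_def op_sub_def by (simp add: e2)
qed

lemma projK_isproj: "closed_sub K \<Longrightarrow> isproj (projK K)"
  unfolding isproj_def using closed_sub.P_lin closed_sub.P_herm closed_sub.P_idem by blast

lemma rpr_isproj: "rp_setup M x \<Longrightarrow> isproj (rpr x)"
  unfolding isproj_def using rp_setup.P_lin rp_setup.P_herm rp_setup.P_idem by blast



locale main_setup =
  fixes M :: "('h::chilbert_space \<Rightarrow> 'h) set" and a :: "'h \<Rightarrow> 'h"
  assumes vn: "von_neumann_algebra M" and aM: "a \<in> M"
    and a0: "op_le op_zero a" and a1: "op_le a id"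
begin

abbreviation "S \<equiv> {z. op_sub id a z = 0}"
abbreviation "Z \<equiv> {z. a z = 0}"
abbreviation "s \<equiv> projK S"
abbreviation "n \<equiv> projK Z"

lemma la: "lin a" using vn_lin[OF vn aM] .
lemma ha: "herm a"
  using op_pos_herm[OF la] a0 unfolding op_le_def op_sub_def op_zero_def by simp
lemma ia_M: "op_sub id a \<in> M" using vn_sub[OF vn vn_id[OF vn] aM] .
lemma l_ia: "lin (op_sub id a)" using vn_lin[OF vn ia_M] .
lemma h_ia: "herm (op_sub id a)" using op_pos_herm[OF l_ia] a1 unfolding op_le_def by simp
lemma rp_ia: "rp_setup M (op_sub id a)" unfolding rp_setup_def using vn ia_M h_ia by blast
lemma rp_a: "rp_setup M a" unfolding rp_setup_def using vn aM ha by blast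

lemma csS: "closed_sub S" using ker_sub[OF vn_bounded[OF vn ia_M]] .
lemma csZ: "closed_sub Z" using ker_sub[OF vn_bounded[OF vn aM]] .

lemma supp_eq: "supp_proj M a = s"
  unfolding supp_proj_def rp_setup.range_proj_is[OF rp_ia] unfolding rpr_def op_sub_def[of id] by auto
lemma null_eq: "null_proj M a = n"
  unfolding null_proj_def rp_setup.range_proj_is[OF rp_a] rpr_def op_sub_def by auto

lemma s_M: "s \<in> M"
proof -
  have "supp_proj M a \<in> M" unfolding supp_proj_def
    using vn_sub[OF vn vn_id[OF vn] rp_setup.P_M[OF rp_ia]] rp_setup.range_proj_is[OF rp_ia] by simp
  thus ?thesis using supp_eq by simp
qed
lemma n_M: "n \<in> M"
proof -
  have "null_proj M a \<in> M" unfolding null_proj_def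
    using vn_sub[OF vn vn_id[OF vn] rp_setup.P_M[OF rp_a]] rp_setup.range_proj_is[OF rp_a] by simp
  thus ?thesis using null_eq by simp
qed

abbreviation "e \<equiv> op_sub a s"
lemma e_eq: "as_part M a = e" unfolding as_part_def supp_eq ..
lemma e_M: "e \<in> M" using vn_sub[OF vn aM s_M] .
lemma ls: "lin s" using closed_sub.P_lin[OF csS] .
lemma ln: "lin n" using closed_sub.P_lin[OF csZ] .
lemma hs: "herm s" using closed_sub.P_herm[OF csS] .
lemma hn: "herm n" using closed_sub.P_herm[OF csZ] .
lemma he: "herm e" using ha hs unfolding herm_def op_sub_def by (simp add: cinner_diff_left cinner_diff_right)
lemma rp_e: "rp_setup M e" unfolding rp_setup_def using vn e_M he by blast
abbreviation "N \<equiv> {z. e z = 0}"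
lemma csN: "closed_sub N" using ker_sub[OF vn_bounded[OF vn e_M]] .
abbreviation "r \<equiv> rpr e"
lemma r_eq: "range_proj M e = r" by (rule rp_setup.range_proj_is[OF rp_e])
lemma r_M: "r \<in> M" by (rule rp_setup.P_M[OF rp_e])
lemma lr: "lin r" by (rule rp_setup.P_lin[OF rp_e])
lemma le: "lin e" using vn_lin[OF vn e_M] .

lemma S_fix: "k \<in> S \<Longrightarrow> a k = k" unfolding op_sub_def by simp
lemma s_in: "a (s y) = s y" using S_fix closed_sub.P_in[OF csS] by blast
lemma n_in: "a (n y) = 0" using closed_sub.P_in[OF csZ] by blast
lemma SZ: "k \<in> S \<Longrightarrow> w \<in> Z \<Longrightarrow> cinner k w = 0"
proof -
  assume k: "k \<in> S" and w: "w \<in> Z"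
  have "cinner k w = cinner (a k) w" using S_fix[OF k] by simp
  also have "\<dots> = cinner k (a w)" using ha unfolding herm_def by simp
  also have "\<dots> = 0" using w by simp
  finally show ?thesis .
qed
lemma orthZS: "w \<in> Z \<Longrightarrow> orth S w" unfolding orth_def using SZ by blast
lemma orthSZ: "k \<in> S \<Longrightarrow> orth Z k" unfolding orth_def using SZ
  by (metis cinner_commute complex_cnj_zero)
lemma s_n: "s (n y) = 0"
  using closed_sub.P_orth_zero[OF csS orthZS[OF closed_sub.P_in[OF csZ]]] .
lemma n_s: "n (s y) = 0"
  using closed_sub.P_orth_zero[OF csZ orthSZ[OF closed_sub.P_in[OF csS]]] .
lemma s_idem: "s (s y) = s y" by (rule closed_sub.P_idem[OF csS])
lemma n_idem: "n (n y) = n y" by (rule closed_sub.P_idem[OF csZ])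

lemma N_split: "m \<in> N \<Longrightarrow> m - s m \<in> Z"
proof -
  assume "m \<in> N"
  hence "a m = s m" unfolding op_sub_def by simp
  thus ?thesis using la s_in by (simp add: lin_diff)
qed

lemma pN: "projK N y = s y + n y"
proof (rule closed_sub.P_unique[OF csN])
  show "s y + n y \<in> N"
    using la ls s_in n_in s_idem s_n unfolding op_sub_def by (simp add: lin_add)
  show "orth N (y - (s y + n y))" unfolding orth_def
  proof
    fix m assume m: "m \<in> N"
    have k: "s m \<in> S" by (rule closed_sub.P_in[OF csS])
    have w: "m - s m \<in> Z" by (rule N_split[OF m])
    have c1: "cinner (s m) (y - (s y + n y)) = 0"
    proof -
      have "cinner (s m) (y - s y) = 0" using closed_sub.P_orth[OF csS, of y] k unfolding orth_def by blast
      moreover have "cinner (s m) (n y) = 0" using SZ[OF k closed_sub.P_in[OF csZ]] .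
      ultimately show ?thesis by (simp add: cinner_diff_right cinner_add_right)
    qed
    have c2: "cinner (m - s m) (y - (s y + n y)) = 0"
    proof -
      have "cinner (m - s m) (y - n y) = 0" using closed_sub.P_orth[OF csZ, of y] w unfolding orth_def by blast
      moreover have "cinner (m - s m) (s y) = 0" using orthSZ[OF closed_sub.P_in[OF csS]] w
        by (metis cinner_commute complex_cnj_zero orth_def)
      ultimately show ?thesis by (simp add: cinner_diff_right cinner_add_right)
    qed
    have "cinner m (y - (s y + n y)) = cinner (s m) (y - (s y + n y)) + cinner (m - s m) (y - (s y + n y))"
      by (simp add: cinner_diff_left)
    thus "cinner m (y - (s y + n y)) = 0" using c1 c2 by simp
  qed
qed

lemma r_def': "r y = y - s y - n y" unfolding rpr_def pN by simp
lemma decomp: "y = s y + r y + n y" unfolding r_def' by simp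
lemma s_r: "s (r y) = 0" unfolding r_def' using ls s_idem s_n by (simp add: lin_diff)
lemma r_s: "r (s y) = 0" unfolding r_def' using s_idem n_s by simp
lemma r_e: "r (e y) = e y" by (rule rp_setup.P_x[OF rp_e])
lemma e_r: "e (r y) = e y" by (rule rp_setup.x_P[OF rp_e])
lemma s_a: "s (a y) = s y"
proof (rule cinner_ext)
  fix u
  have "cinner u (s (a y)) = cinner (s u) (a y)" using hs unfolding herm_def by simp
  also have "\<dots> = cinner (a (s u)) y" using ha unfolding herm_def by simp
  also have "\<dots> = cinner u (s y)" using hs s_in unfolding herm_def by simp
  finally show "cinner u (s (a y)) = cinner u (s y)" .
qed
lemma n_a: "n (a y) = 0"
proof (rule cinner_ext)
  fix u
  have "cinner u (n (a y)) = cinner (n u) (a y)" using hn unfolding herm_def by simp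
  also have "\<dots> = cinner (a (n u)) y" using ha unfolding herm_def by simp
  also have "\<dots> = cinner u 0" using n_in by simp
  finally show "cinner u (n (a y)) = cinner u 0" .
qed
lemma a_split: "a y = e y + s y" unfolding op_sub_def by simp

end



context main_setup begin

lemma isp_s: "isproj s" using projK_isproj[OF csS] .
lemma isp_n: "isproj n" using projK_isproj[OF csZ] .
lemma isp_r: "isproj r" using rpr_isproj[OF rp_e] .

lemma fwd:
  assumes bM: "b \<in> M" and b0: "op_le op_zero b" and b1: "op_le b id" and ba: "b \<circ> a = a \<circ> b"
  shows "\<exists>b1\<in>M. \<exists>b2\<in>M. \<exists>b3\<in>M.
       op_le op_zero b1 \<and> op_le b1 s \<and>
       op_le op_zero b2 \<and> op_le b2 r \<and>
       op_le op_zero b3 \<and> op_le b3 n \<and>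
       b2 \<circ> e = e \<circ> b2 \<and>
       b = op_add (op_add b1 b2) b3"
proof -
  have lb: "lin b" using vn_lin[OF vn bM] .
  have hb: "herm b" using op_pos_herm[OF lb] b0 unfolding op_le_def op_sub_def op_zero_def by simp
  have bau: "b (a y) = a (b y)" for y using ba by (metis comp_apply)
  have bS: "b k \<in> S" if "k \<in> S" for k
  proof -
    have "b k - a (b k) = b (k - a k)" using lb bau by (simp add: lin_diff)
    also have "k - a k = 0" using that unfolding op_sub_def by simp
    finally show ?thesis using lin_zero[OF lb] unfolding op_sub_def by simp
  qed
  have bZ: "b k \<in> Z" if "k \<in> Z" for k
  proof -
    have "a (b k) = b (a k)" using bau by simp
    also have "a k = 0" using that by simp
    finally show ?thesis using lin_zero[OF lb] by simp
  qed
  have bs: "b (s y) = s (b y)" for y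
    by (rule closed_sub.P_commute[OF csS lb, symmetric]) (use bS in blast, use herm_pres_orth[OF hb bS] in blast)
  have bn: "b (n y) = n (b y)" for y
    by (rule closed_sub.P_commute[OF csZ lb, symmetric]) (use bZ in blast, use herm_pres_orth[OF hb bZ] in blast)
  have be: "b (e y) = e (b y)" for y
  proof -
    have "b (e y) = b (a y) - b (s y)" by (simp only: op_sub_def lin_diff[OF lb])
    also have "\<dots> = a (b y) - s (b y)" by (simp only: bau bs)
    also have "\<dots> = e (b y)" by (simp only: op_sub_def)
    finally show ?thesis .
  qed
  have bN: "b k \<in> N" if "k \<in> N" for k
  proof -
    have "e (b k) = b (e k)" by (rule be[symmetric])
    also have "e k = 0" using that by (simp only: mem_Collect_eq)
    also have "b 0 = 0" by (rule lin_zero[OF lb])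
    finally show ?thesis by (simp only: mem_Collect_eq)
  qed
  have bpN: "b (projK N y) = projK N (b y)" for y
    by (rule closed_sub.P_commute[OF csN lb, symmetric]) (use bN in blast, use herm_pres_orth[OF hb bN] in blast)
  have br: "b (r y) = r (b y)" for y unfolding rpr_def using lb bpN by (simp add: lin_diff)
  have P1: "op_le op_zero (b \<circ> s)" "op_le (b \<circ> s) s"
    by (rule corner_pos(1)[OF lb b0 b1 isp_s bs], rule corner_pos(2)[OF lb b0 b1 isp_s bs])
  have P2: "op_le op_zero (b \<circ> r)" "op_le (b \<circ> r) r"
    by (rule corner_pos(1)[OF lb b0 b1 isp_r br], rule corner_pos(2)[OF lb b0 b1 isp_r br])
  have P3: "op_le op_zero (b \<circ> n)" "op_le (b \<circ> n) n"
    by (rule corner_pos(1)[OF lb b0 b1 isp_n bn], rule corner_pos(2)[OF lb b0 b1 isp_n bn])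
  have C: "(b \<circ> r) \<circ> e = e \<circ> (b \<circ> r)"
  proof
    fix y
    show "((b \<circ> r) \<circ> e) y = (e \<circ> (b \<circ> r)) y" using r_e e_r be br by simp
  qed
  have D: "b = op_add (op_add (b \<circ> s) (b \<circ> r)) (b \<circ> n)"
  proof
    fix y
    have "b y = b (s y + r y + n y)" using decomp[of y] by simp
    thus "b y = op_add (op_add (b \<circ> s) (b \<circ> r)) (b \<circ> n) y" unfolding op_add_def using lb by (simp add: lin_add)
  qed
  show ?thesis
    by (rule bexI[of _ "b \<circ> s"], rule bexI[of _ "b \<circ> r"], rule bexI[of _ "b \<circ> n"])
       (use P1 P2 P3 C D vn_comp[OF vn bM s_M] vn_comp[OF vn bM r_M] vn_comp[OF vn bM n_M] in auto)
qed

lemma bwd: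
  assumes bM: "b \<in> M"
    and c1M: "c1 \<in> M" and c2M: "c2 \<in> M" and c3M: "c3 \<in> M"
    and p10: "op_le op_zero c1" and p11: "op_le c1 s"
    and p20: "op_le op_zero c2" and p21: "op_le c2 r"
    and p30: "op_le op_zero c3" and p31: "op_le c3 n"
    and C: "c2 \<circ> e = e \<circ> c2"
    and D: "b = op_add (op_add c1 c2) c3"
  shows "b \<circ> a = a \<circ> b"
proof
  fix y
  have l1: "lin c1" using vn_lin[OF vn c1M] .
  have l2: "lin c2" using vn_lin[OF vn c2M] .
  have l3: "lin c3" using vn_lin[OF vn c3M] .
  have c1s: "c1 u = c1 (s u)" for u
  proof -
    have "c1 (u - s u) = 0" by (rule corner_below(1)[OF l1 p10 p11 isp_s])
    thus ?thesis using l1 by (simp add: lin_diff)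
  qed
  have sc1: "s (c1 u) = c1 u" for u by (rule corner_below(2)[OF l1 p10 p11 isp_s])
  have c2r: "c2 u = c2 (r u)" for u
  proof -
    have "c2 (u - r u) = 0" by (rule corner_below(1)[OF l2 p20 p21 isp_r])
    thus ?thesis using l2 by (simp add: lin_diff)
  qed
  have rc2: "r (c2 u) = c2 u" for u by (rule corner_below(2)[OF l2 p20 p21 isp_r])
  have c3n: "c3 u = c3 (n u)" for u
  proof -
    have "c3 (u - n u) = 0" by (rule corner_below(1)[OF l3 p30 p31 isp_n])
    thus ?thesis using l3 by (simp add: lin_diff)
  qed
  have nc3: "n (c3 u) = c3 u" for u by (rule corner_below(2)[OF l3 p30 p31 isp_n])
  have e1: "c1 (a y) = a (c1 y)"
  proof -
    have "c1 (a y) = c1 (s (a y))" by (rule c1s)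
    also have "\<dots> = c1 y" using s_a c1s by simp
    also have "\<dots> = a (c1 y)" using s_in sc1 by metis
    finally show ?thesis .
  qed
  have e3: "c3 (a y) = a (c3 y)"
  proof -
    have "c3 (a y) = c3 (n (a y))" by (rule c3n)
    also have "\<dots> = 0" using n_a lin_zero[OF l3] by simp
    also have "\<dots> = a (c3 y)" using n_in nc3 by metis
    finally show ?thesis .
  qed
  have e2: "c2 (a y) = a (c2 y)"
  proof -
    have "c2 (a y) = c2 (r (a y))" by (rule c2r)
    also have "r (a y) = e y"
      using a_split[of y] lr r_e r_s by (simp add: lin_add)
    also have "c2 (e y) = e (c2 y)" using C by (metis comp_apply)
    also have "e (c2 y) = a (c2 y)"
    proof -
      have "s (c2 y) = 0" using s_r rc2 by metis
      thus ?thesis using a_split[of "c2 y"] by simp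
    qed
    finally show ?thesis .
  qed
  have la': "lin a" by (rule la)
  show "(b \<circ> a) y = (a \<circ> b) y"
    unfolding D op_add_def using e1 e2 e3 la' by (simp add: lin_add)
qed

end

theorem theorem2p5:
  fixes M :: "('h::chilbert_space \<Rightarrow> 'h) set" and a b :: "'h \<Rightarrow> 'h"
  assumes "von_neumann_algebra M"
    and "a \<in> M" and "op_le op_zero a" and "op_le a id"
    and "b \<in> M" and "op_le op_zero b" and "op_le b id"
  shows "b \<circ> a = a \<circ> b \<longleftrightarrow>
    (\<exists>b1\<in>M. \<exists>b2\<in>M. \<exists>b3\<in>M.
       op_le op_zero b1 \<and> op_le b1 (supp_proj M a) \<and>
       op_le op_zero b2 \<and> op_le b2 (range_proj M (as_part M a)) \<and>
       op_le op_zero b3 \<and> op_le b3 (null_proj M a) \<and>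
       b2 \<circ> as_part M a = as_part M a \<circ> b2 \<and>
       b = op_add (op_add b1 b2) b3)"
proof -
  interpret main_setup M a using assms(1-4) by unfold_locales
  show ?thesis
    unfolding supp_eq null_eq e_eq r_eq
  proof
    assume "b \<circ> a = a \<circ> b"
    thus "\<exists>b1\<in>M. \<exists>b2\<in>M. \<exists>b3\<in>M.
       op_le op_zero b1 \<and> op_le b1 s \<and>
       op_le op_zero b2 \<and> op_le b2 r \<and>
       op_le op_zero b3 \<and> op_le b3 n \<and>
       b2 \<circ> e = e \<circ> b2 \<and>
       b = op_add (op_add b1 b2) b3" using fwd assms(5-7) by blast
  next
    assume "\<exists>b1\<in>M. \<exists>b2\<in>M. \<exists>b3\<in>M.
       op_le op_zero b1 \<and> op_le b1 s \<and>
       op_le op_zero b2 \<and> op_le b2 r \<and>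
       op_le op_zero b3 \<and> op_le b3 n \<and>
       b2 \<circ> e = e \<circ> b2 \<and>
       b = op_add (op_add b1 b2) b3"
    then obtain c1 c2 c3 where "c1 \<in> M" "c2 \<in> M" "c3 \<in> M"
       "op_le op_zero c1" "op_le c1 s"
       "op_le op_zero c2" "op_le c2 r"
       "op_le op_zero c3" "op_le c3 n"
       "c2 \<circ> e = e \<circ> c2"
       "b = op_add (op_add c1 c2) c3" by blast
    thus "b \<circ> a = a \<circ> b" using bwd assms(5) by blast
  qed
qed


end
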